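(* Let $G$ be a graph and $\mathcal H,\mathcal K$ families of subgraphs of $G$, each member inducing a connected subgraph of $G$. If $G$ has a tree decomposition that is $\mathcal K$-easy and $k$-sparse with respect to $\mathcal H$, then $(G,\mathcal H,\mathcal K)$ admits an intersection support of treewidth at most $k$.
   Context: A subgraph $H$ of $G$ is identified with its vertex set $V(H)$. For $K\in\mathcal K$, $\mathcal H_K=\{H\in\mathcal H: V(H)\cap V(K)\ne\emptyset\}$. An intersection support for $(G,\mathcal H,\mathcal K)$ is a graph $\tilde Q$ with vertex set $\mathcal H$ such that $\tilde Q[\mathcal H_K]$ is connected for every $K\in\mathcal K$. For a tree decomposition $(T,\{B_z\})$ of $G$ and an edge $\{x,y\}\in E(T)$, the adhesion set is $A_{xy}=B_x\cap B_y$. The tree decomposition is $\mathcal K$-easy if for every $K\in\mathcal K$ and every adhesion set $A$ with $A\cap V(K)\ne\emptyset$ there is $H\in\mathcal H_K$ with $V(H)\cap V(K)\cap A\ne\emptyset$. It is $k$-sparse with respect to $\mathcal H$ if every bag intersects at most $k$ members of $\mathcal H$. *)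

theory Defs
  imports Main
begin

text \<open>A (simple, undirected) graph is a vertex set V with a set E of
  2-element edges contained in V.  Subgraphs are identified with vertex sets.\<close>
definition graph :: "'a set \<Rightarrow> 'a set set \<Rightarrow> bool" where
  "graph V E \<longleftrightarrow> (\<forall>e\<in>E. e \<subseteq> V \<and> card e = 2)"

text \<open>The subgraph induced (by edge set E) on the vertex set S is connected:
  any two vertices of S are joined by a path inside S (the empty set counts as connected).\<close>
definition induced_connected :: "'a set set \<Rightarrow> 'a set \<Rightarrow> bool" where
  "induced_connected E S \<longleftrightarrow>
     (\<forall>x\<in>S. \<forall>y\<in>S. (x, y) \<in> ({(u, v). u \<in> S \<and> v \<in> S \<and> {u, v} \<in> E})\<^sup>*)"

text \<open>A (finite) tree: nonempty, connected, and every edge is a bridge (minimally connected).\<close>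
definition is_tree :: "'b set \<Rightarrow> 'b set set \<Rightarrow> bool" where
  "is_tree T ET \<longleftrightarrow> graph T ET \<and> finite T \<and> T \<noteq> {} \<and> induced_connected ET T \<and>
     (\<forall>e\<in>ET. \<not> induced_connected (ET - {e}) T)"

definition tree_decomposition ::
  "'a set \<Rightarrow> 'a set set \<Rightarrow> 'b set \<Rightarrow> 'b set set \<Rightarrow> ('b \<Rightarrow> 'a set) \<Rightarrow> bool" where
  "tree_decomposition V E T ET B \<longleftrightarrow>
     is_tree T ET \<and>
     (\<forall>z\<in>T. B z \<subseteq> V) \<and>
     (\<forall>v\<in>V. \<exists>z\<in>T. v \<in> B z) \<and>
     (\<forall>e\<in>E. \<exists>z\<in>T. e \<subseteq> B z) \<and>
     (\<forall>v\<in>V. induced_connected ET {z\<in>T. v \<in> B z})"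

text \<open>Treewidth at most k: some tree decomposition with all bags of size at most k+1.
  (Index type nat suffices for finite graphs.)\<close>
definition treewidth_le :: "'a set \<Rightarrow> 'a set set \<Rightarrow> nat \<Rightarrow> bool" where
  "treewidth_le V E k \<longleftrightarrow>
     (\<exists>(T :: nat set) ET B. tree_decomposition V E T ET B \<and> (\<forall>z\<in>T. card (B z) \<le> k + 1))"

definition meeting :: "'a set set \<Rightarrow> 'a set \<Rightarrow> 'a set set" where
  "meeting Hs K = {H\<in>Hs. H \<inter> K \<noteq> {}}"

definition intersection_support :: "'a set set \<Rightarrow> 'a set set \<Rightarrow> 'a set set set \<Rightarrow> bool" where
  "intersection_support Hs Ks Q \<longleftrightarrow>
     graph Hs Q \<and> (\<forall>K\<in>Ks. induced_connected Q (meeting Hs K))"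

definition K_easy ::
  "'a set set \<Rightarrow> 'a set set \<Rightarrow> 'b set set \<Rightarrow> ('b \<Rightarrow> 'a set) \<Rightarrow> bool" where
  "K_easy Hs Ks ET B \<longleftrightarrow>
     (\<forall>K\<in>Ks. \<forall>x y. {x, y} \<in> ET \<longrightarrow> (B x \<inter> B y) \<inter> K \<noteq> {} \<longrightarrow>
        (\<exists>H\<in>meeting Hs K. H \<inter> K \<inter> (B x \<inter> B y) \<noteq> {}))"

definition sparse :: "nat \<Rightarrow> 'a set set \<Rightarrow> 'b set \<Rightarrow> ('b \<Rightarrow> 'a set) \<Rightarrow> bool" where
  "sparse k Hs T B \<longleftrightarrow> (\<forall>z\<in>T. card {H\<in>Hs. H \<inter> B z \<noteq> {}} \<le> k)"

end

theory Submission
  imports Defs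
begin

lemma conn_map:
  assumes "S \<subseteq> A" "induced_connected E S"
  shows "induced_connected ((`) g ` E) (g ` S)"
  unfolding induced_connected_def
proof (intro ballI)
  fix x y assume "x \<in> g ` S" "y \<in> g ` S"
  then obtain a b where ab: "a \<in> S" "b \<in> S" "x = g a" "y = g b" by auto
  have "(a, b) \<in> {(u, v). u \<in> S \<and> v \<in> S \<and> {u, v} \<in> E}\<^sup>*"
    using assms(2) ab unfolding induced_connected_def by blast
  then have "(g a, g b) \<in> {(u, v). u \<in> g ` S \<and> v \<in> g ` S \<and> {u, v} \<in> (`) g ` E}\<^sup>*"
  proof (induction rule: rtrancl_induct)
    case base then show ?case by simp
  next
    case (step c d)
    then have "(g c, g d) \<in> {(u, v). u \<in> g ` S \<and> v \<in> g ` S \<and> {u, v} \<in> (`) g ` E}"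
      by (auto intro!: image_eqI[where x="{c,d}"])
    with step show ?case by (meson rtrancl.rtrancl_into_rtrancl)
  qed
  then show "(x, y) \<in> {(u, v). u \<in> g ` S \<and> v \<in> g ` S \<and> {u, v} \<in> (`) g ` E}\<^sup>*"
    using ab by simp
qed

lemma conn_unmap:
  assumes "inj_on g A" "S \<subseteq> A" "\<forall>e\<in>E. e \<subseteq> A"
    and "induced_connected ((`) g ` E) (g ` S)"
  shows "induced_connected E S"
proof -
  have "induced_connected ((`) (inv_into A g) ` ((`) g ` E)) (inv_into A g ` (g ` S))"
    by (rule conn_map[OF _ assms(4)]) (use assms in auto)
  moreover have "inv_into A g ` (g ` S) = S" using assms by simp
  moreover have "(`) (inv_into A g) ` ((`) g ` E) = E"
  proof -
    have "(`) (inv_into A g) ` ((`) g ` E) = (\<lambda>e. inv_into A g ` g ` e) ` E"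
      by (simp add: image_image)
    also have "\<dots> = (\<lambda>e. e) ` E" using assms(1,3) by (intro image_cong) auto
    finally show ?thesis by simp
  qed
  ultimately show ?thesis by simp
qed

lemma tree_transfer:
  assumes "is_tree T ET" "inj_on g T"
  shows "is_tree (g ` T) ((`) g ` ET)"
proof -
  have gr: "graph T ET" and fin: "finite T" and ne: "T \<noteq> {}" and con: "induced_connected ET T"
    and mini: "\<forall>e\<in>ET. \<not> induced_connected (ET - {e}) T"
    using assms(1) unfolding is_tree_def by auto
  have sub: "\<forall>e\<in>ET. e \<subseteq> T" using gr unfolding graph_def by auto
  have "graph (g ` T) ((`) g ` ET)"
    unfolding graph_def
  proof
    fix e' assume "e' \<in> (`) g ` ET"
    then obtain e where e: "e \<in> ET" "e' = g ` e" by auto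
    have "card (g ` e) = card e" using e sub assms(2) by (meson card_image inj_on_subset)
    then show "e' \<subseteq> g ` T \<and> card e' = 2" using e sub gr unfolding graph_def by auto
  qed
  moreover have "induced_connected ((`) g ` ET) (g ` T)" by (rule conn_map[OF _ con]) auto
  moreover have "\<forall>e'\<in>(`) g ` ET. \<not> induced_connected ((`) g ` ET - {e'}) (g ` T)"
  proof
    fix e' assume "e' \<in> (`) g ` ET"
    then obtain e where e: "e \<in> ET" "e' = g ` e" by auto
    have injP: "inj_on ((`) g) (Pow T)" using assms(2) by (rule inj_on_image_Pow)
    have "(`) g ` ET - {e'} = (`) g ` (ET - {e})"
    proof
      show "(`) g ` ET - {e'} \<subseteq> (`) g ` (ET - {e})" using e by auto
      show "(`) g ` (ET - {e}) \<subseteq> (`) g ` ET - {e'}"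
      proof
        fix x assume "x \<in> (`) g ` (ET - {e})"
        then obtain f where f: "f \<in> ET" "f \<noteq> e" "x = g ` f" by auto
        have "g ` f \<noteq> g ` e" using injP f e sub unfolding inj_on_def by auto
        then show "x \<in> (`) g ` ET - {e'}" using f e by auto
      qed
    qed
    moreover have "\<not> induced_connected ((`) g ` (ET - {e})) (g ` T)"
    proof
      assume "induced_connected ((`) g ` (ET - {e})) (g ` T)"
      then have "induced_connected (ET - {e}) T"
        using conn_unmap[OF assms(2) order_refl, of "ET - {e}"] sub by auto
      then show False using mini e by auto
    qed
    ultimately show "\<not> induced_connected ((`) g ` ET - {e'}) (g ` T)" by simp
  qed
  ultimately show ?thesis unfolding is_tree_def using fin ne by auto
qed

lemma td_transfer:
  assumes "tree_decomposition V E T ET B" "inj_on g T"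
  shows "tree_decomposition V E (g ` T) ((`) g ` ET) (B \<circ> inv_into T g)"
proof -
  have tr: "is_tree T ET" using assms(1) unfolding tree_decomposition_def by auto
  have sub: "\<forall>e\<in>ET. e \<subseteq> T" using tr unfolding is_tree_def graph_def by auto
  have Bg: "\<And>z. z \<in> T \<Longrightarrow> (B \<circ> inv_into T g) (g z) = B z" using assms(2) by simp
  have "\<forall>v\<in>V. induced_connected ((`) g ` ET) {i \<in> g ` T. v \<in> (B \<circ> inv_into T g) i}"
  proof
    fix v assume "v \<in> V"
    then have c: "induced_connected ET {z\<in>T. v \<in> B z}" using assms(1) unfolding tree_decomposition_def by auto
    have "{i \<in> g ` T. v \<in> (B \<circ> inv_into T g) i} = g ` {z\<in>T. v \<in> B z}" using Bg by force
    then show "induced_connected ((`) g ` ET) {i \<in> g ` T. v \<in> (B \<circ> inv_into T g) i}"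
      using conn_map[OF order_refl c, of g] by simp
  qed
  then show ?thesis using assms(1) tree_transfer[OF tr assms(2)] Bg
    unfolding tree_decomposition_def by (auto; metis)
qed

lemma rt_mono: "(x, y) \<in> R\<^sup>* \<Longrightarrow> R \<subseteq> S \<Longrightarrow> (x, y) \<in> S\<^sup>*"
  using rtrancl_mono by blast

lemma conn_mono:
  assumes "(x, y) \<in> {(u, v). u \<in> S \<and> v \<in> S \<and> {u, v} \<in> E}\<^sup>*" "S \<subseteq> S'"
  shows "(x, y) \<in> {(u, v). u \<in> S' \<and> v \<in> S' \<and> {u, v} \<in> E}\<^sup>*"
  using assms(1) by (rule rt_mono) (use assms(2) in auto)

lemma bag_chain:
  assumes td: "tree_decomposition V E T ET B" and HV: "H \<subseteq> V"
    and p: "(u, w) \<in> {(a, b). a \<in> H \<and> b \<in> H \<and> {a, b} \<in> E}\<^sup>*"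
  shows "\<And>z z'. z \<in> T \<Longrightarrow> u \<in> B z \<Longrightarrow> z' \<in> T \<Longrightarrow> w \<in> B z' \<Longrightarrow> u \<in> H \<Longrightarrow>
    (z, z') \<in> {(a, b). a \<in> T \<and> b \<in> T \<and> {a, b} \<in> ET \<and> B a \<inter> B b \<inter> H \<noteq> {}}\<^sup>*"
  using p
proof (induction arbitrary: rule: rtrancl_induct)
  case base
  have uV: "u \<in> V" using base HV by auto
  have sub: "\<And>z z'. z \<in> T \<Longrightarrow> u \<in> B z \<Longrightarrow> z' \<in> T \<Longrightarrow> u \<in> B z' \<Longrightarrow>
    (z, z') \<in> {(a, b). a \<in> T \<and> b \<in> T \<and> {a, b} \<in> ET \<and> B a \<inter> B b \<inter> H \<noteq> {}}\<^sup>*"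
  proof -
    fix z z' assume a: "z \<in> T" "u \<in> B z" "z' \<in> T" "u \<in> B z'"
    have "(z, z') \<in> {(x, y). x \<in> {z\<in>T. u \<in> B z} \<and> y \<in> {z\<in>T. u \<in> B z} \<and> {x, y} \<in> ET}\<^sup>*"
      using td uV a unfolding tree_decomposition_def induced_connected_def by blast
    then show "(z, z') \<in> {(a, b). a \<in> T \<and> b \<in> T \<and> {a, b} \<in> ET \<and> B a \<inter> B b \<inter> H \<noteq> {}}\<^sup>*"
      by (rule rt_mono) (use base in auto)
  qed
  then show ?case using base by blast
next
  case (step v w)
  obtain z'' where z'': "z'' \<in> T" "{v, w} \<subseteq> B z''"
    using td step(2) unfolding tree_decomposition_def by blast
  have 1: "(z, z'') \<in> {(a, b). a \<in> T \<and> b \<in> T \<and> {a, b} \<in> ET \<and> B a \<inter> B b \<inter> H \<noteq> {}}\<^sup>*"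
    using step z'' by auto
  have wV: "w \<in> V" using step(2) HV by auto
  have "(z'', z') \<in> {(x, y). x \<in> {z\<in>T. w \<in> B z} \<and> y \<in> {z\<in>T. w \<in> B z} \<and> {x, y} \<in> ET}\<^sup>*"
    using td wV z'' step unfolding tree_decomposition_def induced_connected_def by blast
  then have "(z'', z') \<in> {(a, b). a \<in> T \<and> b \<in> T \<and> {a, b} \<in> ET \<and> B a \<inter> B b \<inter> H \<noteq> {}}\<^sup>*"
    by (rule rt_mono) (use step in auto)
  with 1 show ?case by (rule rtrancl_trans)
qed


theorem mainTheorem11:
  fixes V :: "'a set" and E :: "'a set set" and Hs Ks :: "'a set set"
    and T :: "'b set" and ET :: "'b set set" and B :: "'b \<Rightarrow> 'a set" and k :: nat
  assumes "graph V E" and "finite V"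
    and "\<forall>H\<in>Hs. H \<subseteq> V \<and> induced_connected E H"
    and "\<forall>K\<in>Ks. K \<subseteq> V \<and> induced_connected E K"
    and "tree_decomposition V E T ET B"
    and "K_easy Hs Ks ET B"
    and "sparse k Hs T B"
  shows "\<exists>Q. intersection_support Hs Ks Q \<and> treewidth_le Hs Q k"
proof -
  note td = assms(5)
  have tr: "is_tree T ET" using td unfolding tree_decomposition_def by auto
  then have finT: "finite T" and neT: "T \<noteq> {}" unfolding is_tree_def by auto
  then obtain z0 where z0: "z0 \<in> T" by auto
  have finHs: "finite Hs" using assms(2,3) by (meson Pow_iff finite_Pow_iff finite_subset subsetI)
  define Q where "Q = {{H, H'} | H H'. H \<in> Hs \<and> H' \<in> Hs \<and> H \<noteq> H' \<and>
      (\<exists>z\<in>T. H \<inter> B z \<noteq> {} \<and> H' \<inter> B z \<noteq> {})}"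
  define B0 where "B0 z = {H\<in>Hs. H \<inter> B z \<noteq> {} \<or> (H = {} \<and> z = z0)}" for z
  have grQ: "graph Hs Q" unfolding graph_def Q_def by (auto simp: card_insert_if)
  have same: "(H, H') \<in> {(u, v). u \<in> meeting Hs K \<and> v \<in> meeting Hs K \<and> {u, v} \<in> Q}\<^sup>*"
    if "a \<in> T" "H \<in> Hs" "H' \<in> Hs" "H \<inter> K \<inter> B a \<noteq> {}" "H' \<inter> K \<inter> B a \<noteq> {}" for H H' K a
  proof (cases "H = H'")
    case True then show ?thesis by simp
  next
    case False
    have "{H, H'} \<in> Q" unfolding Q_def using that False by blast
    moreover have "H \<in> meeting Hs K" "H' \<in> meeting Hs K" using that unfolding meeting_def by auto
    ultimately show ?thesis by auto
  qed
  have chain: "\<And>H'. H \<in> Hs \<Longrightarrow> H \<inter> K \<inter> B a \<noteq> {} \<Longrightarrow> H' \<in> Hs \<Longrightarrow> H' \<inter> K \<inter> B b \<noteq> {} \<Longrightarrow>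
      (H, H') \<in> {(u, v). u \<in> meeting Hs K \<and> v \<in> meeting Hs K \<and> {u, v} \<in> Q}\<^sup>*"
    if K: "K \<in> Ks" and a: "a \<in> T"
      and p: "(a, b) \<in> {(a, b). a \<in> T \<and> b \<in> T \<and> {a, b} \<in> ET \<and> B a \<inter> B b \<inter> K \<noteq> {}}\<^sup>*"
    for H K a b
    using p
  proof (induction rule: rtrancl_induct)
    case base then show ?case using same[OF a] by blast
  next
    case (step b c)
    then have bc: "b \<in> T" "c \<in> T" "{b, c} \<in> ET" "B b \<inter> B c \<inter> K \<noteq> {}" by auto
    then obtain H'' where H'': "H'' \<in> meeting Hs K" "H'' \<inter> K \<inter> (B b \<inter> B c) \<noteq> {}"
      using assms(6) K unfolding K_easy_def by blast
    have 1: "(H, H'') \<in> {(u, v). u \<in> meeting Hs K \<and> v \<in> meeting Hs K \<and> {u, v} \<in> Q}\<^sup>*"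
      using step H'' unfolding meeting_def by blast
    have 2: "(H'', H') \<in> {(u, v). u \<in> meeting Hs K \<and> v \<in> meeting Hs K \<and> {u, v} \<in> Q}\<^sup>*"
      using same[OF bc(2)] H'' step unfolding meeting_def by blast
    show ?case using 1 2 by (rule rtrancl_trans)
  qed
  have supp: "intersection_support Hs Ks Q"
    unfolding intersection_support_def induced_connected_def
  proof (intro conjI grQ ballI)
    fix K H1 H2 assume K: "K \<in> Ks" and H1: "H1 \<in> meeting Hs K" and H2: "H2 \<in> meeting Hs K"
    obtain v1 where v1: "v1 \<in> H1" "v1 \<in> K" using H1 unfolding meeting_def by auto
    obtain v2 where v2: "v2 \<in> H2" "v2 \<in> K" using H2 unfolding meeting_def by auto
    have KV: "K \<subseteq> V" and Kc: "induced_connected E K" using assms(4) K by auto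
    obtain z1 where z1: "z1 \<in> T" "v1 \<in> B z1" using td KV v1 unfolding tree_decomposition_def by blast
    obtain z2 where z2: "z2 \<in> T" "v2 \<in> B z2" using td KV v2 unfolding tree_decomposition_def by blast
    have "(v1, v2) \<in> {(a, b). a \<in> K \<and> b \<in> K \<and> {a, b} \<in> E}\<^sup>*"
      using Kc v1 v2 unfolding induced_connected_def by blast
    then have "(z1, z2) \<in> {(a, b). a \<in> T \<and> b \<in> T \<and> {a, b} \<in> ET \<and> B a \<inter> B b \<inter> K \<noteq> {}}\<^sup>*"
      using bag_chain[OF td KV] z1 z2 v1 by blast
    then show "(H1, H2) \<in> {(u, v). u \<in> meeting Hs K \<and> v \<in> meeting Hs K \<and> {u, v} \<in> Q}\<^sup>*"
      using chain[OF K z1(1)] H1 H2 v1 v2 z1 z2 unfolding meeting_def by blast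
  qed
  have td0: "tree_decomposition Hs Q T ET B0"
    unfolding tree_decomposition_def
  proof (intro conjI tr ballI)
    show "\<And>z. B0 z \<subseteq> Hs" unfolding B0_def by auto
    fix H assume H: "H \<in> Hs"
    show "\<exists>z\<in>T. H \<in> B0 z"
    proof (cases "H = {}")
      case True then show ?thesis using z0 H unfolding B0_def by auto
    next
      case False
      then obtain u where "u \<in> H" by auto
      then obtain z where "z \<in> T" "u \<in> B z" using td H assms(3) unfolding tree_decomposition_def by blast
      then show ?thesis using H \<open>u \<in> H\<close> unfolding B0_def by auto
    qed
    show "induced_connected ET {z \<in> T. H \<in> B0 z}"
    proof (cases "H = {}")
      case True
      then have "{z \<in> T. H \<in> B0 z} = {z0}" using z0 H unfolding B0_def by auto
      then show ?thesis unfolding induced_connected_def by auto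
    next
      case False
      have eq: "{z \<in> T. H \<in> B0 z} = {z \<in> T. H \<inter> B z \<noteq> {}}" using False H unfolding B0_def by auto
      have HV: "H \<subseteq> V" and Hc: "induced_connected E H" using assms(3) H by auto
      show ?thesis unfolding eq induced_connected_def
      proof (intro ballI)
        fix x y assume x: "x \<in> {z \<in> T. H \<inter> B z \<noteq> {}}" and y: "y \<in> {z \<in> T. H \<inter> B z \<noteq> {}}"
        obtain u where u: "u \<in> H" "u \<in> B x" using x by auto
        obtain w where w: "w \<in> H" "w \<in> B y" using y by auto
        have "(u, w) \<in> {(a, b). a \<in> H \<and> b \<in> H \<and> {a, b} \<in> E}\<^sup>*"
          using Hc u w unfolding induced_connected_def by blast
        then have "(x, y) \<in> {(a, b). a \<in> T \<and> b \<in> T \<and> {a, b} \<in> ET \<and> B a \<inter> B b \<inter> H \<noteq> {}}\<^sup>*"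
          using bag_chain[OF td HV] x y u w by blast
        then show "(x, y) \<in> {(u, v). u \<in> {z \<in> T. H \<inter> B z \<noteq> {}} \<and> v \<in> {z \<in> T. H \<inter> B z \<noteq> {}} \<and> {u, v} \<in> ET}\<^sup>*"
          by (rule rt_mono) auto
      qed
    qed
  next
    fix e assume "e \<in> Q"
    then show "\<exists>z\<in>T. e \<subseteq> B0 z" unfolding Q_def B0_def by blast
  qed
  have card0: "card (B0 z) \<le> k + 1" if "z \<in> T" for z
  proof -
    have "B0 z \<subseteq> insert {} {H\<in>Hs. H \<inter> B z \<noteq> {}}" unfolding B0_def by auto
    then have "card (B0 z) \<le> card (insert {} {H\<in>Hs. H \<inter> B z \<noteq> {}})"
      by (rule card_mono[rotated]) (use finHs in auto)
    also have "\<dots> \<le> card {H\<in>Hs. H \<inter> B z \<noteq> {}} + 1" by (simp add: card_insert_le_m1 card_insert_if)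
    also have "\<dots> \<le> k + 1" using assms(7) that unfolding sparse_def by auto
    finally show ?thesis .
  qed
  obtain g :: "'b \<Rightarrow> nat" and n where g: "inj_on g T" using finite_imp_inj_to_nat_seg[OF finT] by blast
  have "tree_decomposition Hs Q (g ` T) ((`) g ` ET) (B0 \<circ> inv_into T g)"
    by (rule td_transfer[OF td0 g])
  moreover have "\<forall>i\<in>g ` T. card ((B0 \<circ> inv_into T g) i) \<le> k + 1" using card0 g by auto
  ultimately have "treewidth_le Hs Q k" unfolding treewidth_le_def by blast
  with supp show ?thesis by blast
qed

end
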